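(* In the two-tier residency matching game described in the context (list length $K$, high-match value $v>1$), under the large market approximation, a symmetric equilibrium for high doctors always exists.
   Context: Model: there are high-tier and low-tier doctors and high-tier and low-tier hospitals, each hospital having one position. Every hospital prefers every high doctor to every low doctor, and every doctor prefers every high hospital to every low hospital; within a tier, preferences are independent uniformly random permutations. Each doctor submits a ranked list of exactly $K$ hospitals; hospitals submit full true rankings; doctor-proposing deferred acceptance is run. A doctor's strategy is a pair $(k,K-k)$: he lists his $k$ most preferred high hospitals followed by his $K-k$ most preferred low hospitals. A doctor gets value $v>1$ if matched to a high hospital, $1$ if matched to a low one, $0$ otherwise. Large market approximation: in the limit of many agents (tier proportions, $K$, $v$ fixed), given the strategy profile, each application of a high doctor to a high (resp. low) hospital is accepted independently with a probability $p$ (resp. $p'$) determined by the aggregate profile via fixed-point equations (expected matched doctors = expected hospitals receiving at least one application, a hospital with on average $\lambda$ applications receiving none with probability $e^{-\lambda}$), and unaffected by an individual doctor's choice. Since hospitals rank all high doctors above low ones, the high doctors' assignment does not depend on low doctors. A symmetric equilibrium for high doctors is a (possibly mixed) strategy used by all high doctors such that every strategy in its support maximizes a high doctor's expected value given $p,p'$. *)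

theory Defs
  imports Complex_Main
begin

text \<open>
Masses (relative to market size) of high doctors
dH, high hospitals hH and low hospitals hL are fixed positive reals.
A mixed strategy for high doctors is a probability vector sigma on {0..K}:
sigma k is the share of high doctors using strategy (k, K-k).
p  = acceptance probability of an application of a high doctor to a high hospital,
p' = acceptance probability of an application of a high doctor to a low hospital.
\<close>

definition mixed_strategy :: "nat \<Rightarrow> (nat \<Rightarrow> real) \<Rightarrow> bool" where
  "mixed_strategy K \<sigma> \<longleftrightarrow> (\<forall>k\<le>K. 0 \<le> \<sigma> k) \<and> (\<Sum>k\<le>K. \<sigma> k) = 1"

text \<open>Expected value of strategy (k, K-k): v if matched high, 1 if matched low.\<close>
definition payoff :: "nat \<Rightarrow> real \<Rightarrow> real \<Rightarrow> real \<Rightarrow> nat \<Rightarrow> real" where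
  "payoff K v p p' k = v * (1 - (1 - p) ^ k) + (1 - p) ^ k * (1 - (1 - p') ^ (K - k))"

text \<open>Average number of high-doctor applications received by a high hospital.\<close>
definition lamH :: "nat \<Rightarrow> real \<Rightarrow> real \<Rightarrow> (nat \<Rightarrow> real) \<Rightarrow> real \<Rightarrow> real" where
  "lamH K dH hH \<sigma> p = dH / hH * (\<Sum>k\<le>K. \<sigma> k * (\<Sum>i<k. (1 - p) ^ i))"

text \<open>Average number of high-doctor applications received by a low hospital.\<close>
definition lamL :: "nat \<Rightarrow> real \<Rightarrow> real \<Rightarrow> (nat \<Rightarrow> real) \<Rightarrow> real \<Rightarrow> real \<Rightarrow> real" where
  "lamL K dH hL \<sigma> p p' = dH / hL * (\<Sum>k\<le>K. \<sigma> k * (1 - p) ^ k * (\<Sum>i<K - k. (1 - p') ^ i))"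

text \<open>Fixed-point equations: expected number of matched high doctors at high (low)
hospitals equals expected number of high (low) hospitals receiving at least one
application.  Convention: if a tier receives no applications, the acceptance
probability is 1 (the limit of (1 - exp(-x))/x as x tends to 0).\<close>
definition fixed_point ::
  "nat \<Rightarrow> real \<Rightarrow> real \<Rightarrow> real \<Rightarrow> (nat \<Rightarrow> real) \<Rightarrow> real \<Rightarrow> real \<Rightarrow> bool" where
  "fixed_point K dH hH hL \<sigma> p p' \<longleftrightarrow>
     0 < p \<and> p \<le> 1 \<and> 0 < p' \<and> p' \<le> 1 \<and>
     dH * (\<Sum>k\<le>K. \<sigma> k * (1 - (1 - p) ^ k)) = hH * (1 - exp (- lamH K dH hH \<sigma> p)) \<and>
     (lamH K dH hH \<sigma> p = 0 \<longrightarrow> p = 1) \<and>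
     dH * (\<Sum>k\<le>K. \<sigma> k * (1 - p) ^ k * (1 - (1 - p') ^ (K - k)))
        = hL * (1 - exp (- lamL K dH hL \<sigma> p p')) \<and>
     (lamL K dH hL \<sigma> p p' = 0 \<longrightarrow> p' = 1)"

definition best_responses :: "nat \<Rightarrow> real \<Rightarrow> (nat \<Rightarrow> real) \<Rightarrow> real \<Rightarrow> real \<Rightarrow> bool" where
  "best_responses K v \<sigma> p p' \<longleftrightarrow>
     (\<forall>k\<le>K. 0 < \<sigma> k \<longrightarrow> (\<forall>j\<le>K. payoff K v p p' j \<le> payoff K v p p' k))"

definition symmetric_equilibrium_high ::
  "nat \<Rightarrow> real \<Rightarrow> real \<Rightarrow> real \<Rightarrow> real \<Rightarrow> (nat \<Rightarrow> real) \<Rightarrow> bool" where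
  "symmetric_equilibrium_high K v dH hH hL \<sigma> \<longleftrightarrow>
     mixed_strategy K \<sigma> \<and>
     (\<exists>p p'. fixed_point K dH hH hL \<sigma> p p') \<and>
     (\<forall>p p'. fixed_point K dH hH hL \<sigma> p p' \<longrightarrow> best_responses K v \<sigma> p p')"

end

theory Submission
  imports Defs "HOL-Analysis.Elementary_Metric_Spaces"
begin


lemma S_mono:
  fixes x y :: real
  assumes "0 \<le> x" "x \<le> y" "y \<le> 1"
  shows "(\<Sum>i<m. (1-y)^i) \<le> (\<Sum>i<m. (1-x)^i)"
  by (rule sum_mono) (use assms in \<open>auto intro: power_mono\<close>)

lemma S_ge1:
  fixes x :: real
  assumes "x \<le> 1" "0 < m"
  shows "1 \<le> (\<Sum>i<m. (1-x)^i)"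
proof -
  have "(\<Sum>i<m. (1-x)^i) = (\<Sum>i\<in>{0} \<union> ({..<m}-{0}). (1-x)^i)"
    using assms by (intro sum.cong) auto
  also have "\<dots> = 1 + (\<Sum>i\<in>{..<m}-{0}. (1-x)^i)"
    by (subst sum.union_disjoint) auto
  also have "\<dots> \<ge> 1" using assms by (auto intro!: sum_nonneg)
  finally show ?thesis .
qed

lemma S_ident:
  fixes x :: real
  shows "1 - (1-x)^m = x * (\<Sum>i<m. (1-x)^i)"
  using one_diff_power_eq[of "1-x" m] by simp

locale gen =
  fixes D H :: real and K :: nat and n :: "nat \<Rightarrow> nat"
  assumes Dpos: "D > 0" and Hpos: "H > 0"
begin

definition lam where "lam c x = D/H * (\<Sum>k\<le>K. c k * (\<Sum>i<n k. (1-x)^i))"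
definition T where "T c x = D/H * (\<Sum>k\<le>K. c k * (1-(1-x)^n k))"
definition h where "h c x = T c x - (1 - exp (- lam c x))"
definition eqn where "eqn c x \<longleftrightarrow> 0 < x \<and> x \<le> 1 \<and>
   D * (\<Sum>k\<le>K. c k * (1-(1-x)^n k)) = H * (1 - exp (- lam c x)) \<and> (lam c x = 0 \<longrightarrow> x = 1)"
definition Mp where "Mp c \<longleftrightarrow> (\<exists>k\<le>K. 0 < c k \<and> 0 < n k)"
definition rt where "rt c = (THE x. eqn c x)"

lemma T_eq: "T c x = x * lam c x"
  unfolding T_def lam_def by (simp add: S_ident sum_distrib_left algebra_simps)

lemma eqn_h: "eqn c x \<longleftrightarrow> 0 < x \<and> x \<le> 1 \<and> h c x = 0 \<and> (lam c x = 0 \<longrightarrow> x = 1)"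
proof -
  have aux: "\<And>S::real. D * S = H * (D/H*S)" using Hpos by simp
  have "D * (\<Sum>k\<le>K. c k * (1-(1-x)^n k)) = H * T c x"
    unfolding T_def by (rule aux)
  moreover have "H * T c x = H * (1 - exp (- lam c x)) \<longleftrightarrow> T c x - (1 - exp (- lam c x)) = 0"
    using Hpos by simp
  ultimately show ?thesis unfolding eqn_def h_def by simp
qed

lemma lam_nonneg: assumes "\<forall>k\<le>K. 0 \<le> c k" "x \<le> 1" shows "0 \<le> lam c x"
  unfolding lam_def using assms Dpos Hpos
  by (intro mult_nonneg_nonneg sum_nonneg) (auto intro!: sum_nonneg)

lemma lam_mono: assumes "\<forall>k\<le>K. 0 \<le> c k" "0 \<le> x" "x \<le> y" "y \<le> 1"
  shows "lam c y \<le> lam c x"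
  unfolding lam_def using assms Dpos Hpos
  by (intro mult_left_mono sum_mono mult_left_mono S_mono) auto

lemma T_mono: assumes "\<forall>k\<le>K. 0 \<le> c k" "0 \<le> x" "x \<le> y" "y \<le> 1"
  shows "T c x \<le> T c y"
  unfolding T_def using assms Dpos Hpos
  by (intro mult_left_mono sum_mono mult_left_mono) (auto intro: power_mono)

lemma T_strict: assumes "\<forall>k\<le>K. 0 \<le> c k" "Mp c" "0 \<le> x" "x < y" "y \<le> 1"
  shows "T c x < T c y"
proof -
  obtain k0 where k0: "k0 \<le> K" "0 < c k0" "0 < n k0" using assms(2) Mp_def by auto
  have "(\<Sum>k\<le>K. c k * (1-(1-x)^n k)) < (\<Sum>k\<le>K. c k * (1-(1-y)^n k))"
  proof (rule sum_strict_mono_ex1)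
    show "\<forall>k\<in>{..K}. c k * (1-(1-x)^n k) \<le> c k * (1-(1-y)^n k)"
      using assms by (auto intro!: mult_left_mono power_mono)
    have "(1-y)^n k0 < (1-x)^n k0"
      using assms k0 by (intro power_strict_mono) auto
    then show "\<exists>k\<in>{..K}. c k * (1-(1-x)^n k) < c k * (1-(1-y)^n k)"
      using k0 by (intro bexI[of _ k0]) auto
  qed simp
  then show ?thesis unfolding T_def using Dpos Hpos
    by (simp add: mult_strict_left_mono divide_strict_right_mono)
qed

lemma h_mono: assumes "\<forall>k\<le>K. 0 \<le> c k" "0 \<le> x" "x \<le> y" "y \<le> 1"
  shows "h c x \<le> h c y"
proof -
  have "exp (- lam c x) \<le> exp (- lam c y)" using lam_mono[OF assms] by simp
  then show ?thesis using T_mono[OF assms] unfolding h_def by linarith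
qed

lemma h_strict: assumes "\<forall>k\<le>K. 0 \<le> c k" "Mp c" "0 \<le> x" "x < y" "y \<le> 1"
  shows "h c x < h c y"
proof -
  have "exp (- lam c x) \<le> exp (- lam c y)" using lam_mono[of c x y] assms by simp
  then show ?thesis using T_strict[OF assms] unfolding h_def by linarith
qed

lemma lam_zero: assumes "\<forall>k\<le>K. 0 \<le> c k" "\<not> Mp c" shows "lam c x = 0"
proof -
  have "c k * (\<Sum>i<n k. (1-x)^i) = 0" if "k \<le> K" for k
  proof (cases "c k = 0")
    case False
    then have "n k = 0" using assms that unfolding Mp_def by force
    then show ?thesis by simp
  qed simp
  then have "(\<Sum>k\<le>K. c k * (\<Sum>i<n k. (1-x)^i)) = 0" by (intro sum.neutral) auto
  then show ?thesis unfolding lam_def by simp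
qed

lemma lam_pos: assumes "\<forall>k\<le>K. 0 \<le> c k" "Mp c" "x \<le> 1" shows "0 < lam c x"
proof -
  obtain k0 where k0: "k0 \<le> K" "0 < c k0" "0 < n k0" using assms(2) Mp_def by auto
  have "c k0 * (\<Sum>i<n k0. (1-x)^i) \<le> (\<Sum>k\<le>K. c k * (\<Sum>i<n k. (1-x)^i))"
    using assms k0 by (intro member_le_sum) (auto intro!: sum_nonneg mult_nonneg_nonneg)
  moreover have "0 < c k0 * (\<Sum>i<n k0. (1-x)^i)"
    using S_ge1[of x "n k0"] k0 assms by auto
  ultimately show ?thesis unfolding lam_def using Dpos Hpos by simp
qed

lemma cont_h: "continuous_on A (h c)"
  unfolding h_def T_def lam_def by (intro continuous_intros)

lemma h_no_Mp: assumes "\<forall>k\<le>K. 0 \<le> c k" "\<not> Mp c" shows "h c x = 0"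
  unfolding h_def using T_eq[of c x] lam_zero[OF assms] by simp

lemma exp_bound: assumes "(0::real) \<le> l" shows "exp (- l) \<le> 1 - l + l * l"
proof -
  have e: "1 + l \<le> exp l" by simp
  have "exp (- l) = 1 / exp l" by (simp add: exp_minus')
  also have "\<dots> \<le> 1 / (1 + l)" using e assms by (intro divide_left_mono) auto
  also have "\<dots> \<le> 1 - l + l * l"
  proof -
    have "1 \<le> (1 - l + l * l) * (1 + l)" using assms
      by (simp add: algebra_simps)
    then show ?thesis using assms by (simp add: divide_le_eq)
  qed
  finally show ?thesis .
qed

lemma eqn_ex1: assumes nn: "\<forall>k\<le>K. 0 \<le> c k" shows "\<exists>!x. eqn c x"
proof (cases "Mp c")
  case False
  then show ?thesis unfolding eqn_h using lam_zero[OF nn False] h_no_Mp[OF nn False] by auto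
next
  case True
  define \<mu> where "\<mu> = lam c 1"
  define L where "L = lam c 0"
  have mu: "0 < \<mu>" unfolding \<mu>_def using lam_pos[OF nn True] by simp
  have muL: "\<mu> \<le> L" unfolding \<mu>_def L_def using lam_mono[OF nn, of 0 1] by simp
  define x0 where "x0 = min 1 ((1 - exp (- \<mu>)) / L)"
  have emu: "0 < 1 - exp (- \<mu>)" using mu by simp
  have x0: "0 < x0" "x0 \<le> 1" unfolding x0_def using emu mu muL by auto
  have x0L: "x0 * L \<le> 1 - exp (- \<mu>)"
  proof -
    have "x0 \<le> (1 - exp (- \<mu>)) / L" unfolding x0_def by simp
    then show ?thesis using mu muL by (simp add: le_divide_eq)
  qed
  have hx0: "h c x0 \<le> 0"
  proof -
    have l1: "lam c x0 \<le> L" unfolding L_def using lam_mono[OF nn, of 0 x0] x0 by simp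
    have l2: "\<mu> \<le> lam c x0" unfolding \<mu>_def using lam_mono[OF nn, of x0 1] x0 by simp
    have "x0 * lam c x0 \<le> x0 * L" using l1 x0 by (intro mult_left_mono) auto
    moreover have "exp (- lam c x0) \<le> exp (- \<mu>)" using l2 by simp
    ultimately show ?thesis unfolding h_def T_eq using x0L by linarith
  qed
  have h1: "0 \<le> h c 1"
  proof -
    have "1 + (- lam c 1) \<le> exp (- lam c 1)" by (rule exp_ge_add_one_self)
    then show ?thesis unfolding h_def T_eq by simp
  qed
  obtain x where x: "x0 \<le> x" "x \<le> 1" "h c x = 0"
    using IVT'[of "h c" x0 0 1, OF hx0 h1 x0(2) cont_h] by auto
  have ex: "eqn c x" unfolding eqn_h using x x0 lam_pos[OF nn True, of x] by auto
  show ?thesis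
  proof (rule ex1I[of _ x])
    show "eqn c x" by fact
    fix y assume y: "eqn c y"
    show "y = x"
    proof (rule ccontr)
      assume "y \<noteq> x"
      then consider "y < x" | "x < y" by linarith
      then show False
      proof cases
        case 1
        then have "h c y < h c x" using h_strict[OF nn True, of y x] y x unfolding eqn_h by auto
        then show False using x y unfolding eqn_h by auto
      next
        case 2
        then have "h c x < h c y" using h_strict[OF nn True, of x y] y x x0 unfolding eqn_h by auto
        then show False using x y unfolding eqn_h by auto
      qed
    qed
  qed
qed

lemma root_eqn: assumes "\<forall>k\<le>K. 0 \<le> c k" shows "eqn c (rt c)"
  unfolding rt_def using theI'[OF eqn_ex1[OF assms]] .

lemma root_unique: assumes "\<forall>k\<le>K. 0 \<le> c k" "eqn c x" shows "rt c = x"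
  using eqn_ex1[OF assms(1)] root_eqn[OF assms(1)] assms(2) by auto

lemma root_range: assumes "\<forall>k\<le>K. 0 \<le> c k" shows "0 < rt c" "rt c \<le> 1"
  using root_eqn[OF assms] unfolding eqn_def by auto

lemma root_cont:
  fixes c :: "real \<Rightarrow> nat \<Rightarrow> real"
  assumes nn: "\<forall>s\<in>{0..1}. \<forall>k\<le>K. 0 \<le> c s k"
    and cc: "\<And>k. k \<le> K \<Longrightarrow> continuous_on {0..1} (\<lambda>s. c s k)"
  shows "continuous_on {0..1} (\<lambda>s. rt (c s))"
proof -
  have ch: "continuous_on {0..1} (\<lambda>s. h (c s) y)" for y
    unfolding h_def T_def lam_def by (intro continuous_intros cc) auto
  have cl: "continuous_on {0..1} (\<lambda>s. lam (c s) y)" for y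
    unfolding lam_def by (intro continuous_intros cc) auto
  have loc: "\<exists>d>0. \<forall>s\<in>{0..1}. dist s s0 < d \<longrightarrow> 0 < f s"
    if fc: "continuous_on {0..1} f" "s0 \<in> {0..1::real}" "0 < (f s0::real)" for f s0
  proof -
    obtain d where "d > 0" "\<forall>s\<in>{0..1}. dist s s0 < d \<longrightarrow> dist (f s) (f s0) < f s0"
      using fc unfolding continuous_on_iff by metis
    then show ?thesis by (intro exI[of _ d]) (auto simp: dist_real_def)
  qed
  show ?thesis
  proof (rule continuous_on_iff[THEN iffD2], intro ballI allI impI)
    fix s0 :: real and e :: real
    assume s0: "s0 \<in> {0..1}" and e: "0 < e"
    define X0 where "X0 = rt (c s0)"
    have nn0: "\<forall>k\<le>K. 0 \<le> c s0 k" using nn s0 by auto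
    have X0: "eqn (c s0) X0" unfolding X0_def by (rule root_eqn[OF nn0])
    show "\<exists>d>0. \<forall>s\<in>{0..1}. dist s s0 < d \<longrightarrow> dist (rt (c s)) (rt (c s0)) < e"
    proof (cases "Mp (c s0)")
      case True
      obtain d1 where d1: "d1 > 0" "\<forall>s\<in>{0..1}. dist s s0 < d1 \<longrightarrow> X0 - e < rt (c s)"
      proof (cases "0 < X0 - e")
        case True2: True
        have "h (c s0) (X0 - e) < h (c s0) X0"
          using h_strict[OF nn0 True, of "X0 - e" X0] True2 e X0 unfolding eqn_def by auto
        then have "0 < - h (c s0) (X0 - e)" using X0 unfolding eqn_h by auto
        then obtain d where d: "d > 0" "\<forall>s\<in>{0..1}. dist s s0 < d \<longrightarrow> 0 < - h (c s) (X0 - e)"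
          using loc[of "\<lambda>s. - h (c s) (X0 - e)" s0] s0 continuous_on_minus[OF ch] by blast
        show ?thesis
        proof (rule that[OF d(1)], intro ballI impI)
          fix s :: real assume s: "s \<in> {0..1}" "dist s s0 < d"
          have nns: "\<forall>k\<le>K. 0 \<le> c s k" using nn s by auto
          show "X0 - e < rt (c s)"
          proof (rule ccontr)
            assume "\<not> X0 - e < rt (c s)"
            then have "h (c s) (rt (c s)) \<le> h (c s) (X0 - e)"
              using h_mono[OF nns, of "rt (c s)" "X0 - e"] root_range[OF nns] X0 e
              unfolding eqn_def by auto
            then show False using d s root_eqn[OF nns] unfolding eqn_h by auto
          qed
        qed
      next
        case False
        show ?thesis
        proof (rule that[of 1])
          show "\<forall>s\<in>{0..1}. dist s s0 < 1 \<longrightarrow> X0 - e < rt (c s)"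
          proof (intro ballI impI)
            fix s :: real assume "s \<in> {0..1}"
            then have nns: "\<forall>k\<le>K. 0 \<le> c s k" using nn by auto
            show "X0 - e < rt (c s)" using root_range(1)[OF nns] False by linarith
          qed
        qed simp
      qed
      obtain d2 where d2: "d2 > 0" "\<forall>s\<in>{0..1}. dist s s0 < d2 \<longrightarrow> rt (c s) < X0 + e"
      proof (cases "X0 + e \<le> 1")
        case True2: True
        have "h (c s0) X0 < h (c s0) (X0 + e)"
          using h_strict[OF nn0 True, of X0 "X0 + e"] True2 e X0 unfolding eqn_def by auto
        then have "0 < h (c s0) (X0 + e)" using X0 unfolding eqn_h by auto
        then obtain d where d: "d > 0" "\<forall>s\<in>{0..1}. dist s s0 < d \<longrightarrow> 0 < h (c s) (X0 + e)"
          using loc[of "\<lambda>s. h (c s) (X0 + e)" s0] s0 ch by blast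
        show ?thesis
        proof (rule that[OF d(1)], intro ballI impI)
          fix s :: real assume s: "s \<in> {0..1}" "dist s s0 < d"
          have nns: "\<forall>k\<le>K. 0 \<le> c s k" using nn s by auto
          show "rt (c s) < X0 + e"
          proof (rule ccontr)
            assume "\<not> rt (c s) < X0 + e"
            then have "h (c s) (X0 + e) \<le> h (c s) (rt (c s))"
              using h_mono[OF nns, of "X0 + e" "rt (c s)"] root_range[OF nns] X0 e
              unfolding eqn_def by auto
            then show False using d s root_eqn[OF nns] unfolding eqn_h by auto
          qed
        qed
      next
        case False
        show ?thesis
        proof (rule that[of 1])
          show "\<forall>s\<in>{0..1}. dist s s0 < 1 \<longrightarrow> rt (c s) < X0 + e"
          proof (intro ballI impI)
            fix s :: real assume "s \<in> {0..1}"
            then have nns: "\<forall>k\<le>K. 0 \<le> c s k" using nn by auto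
            show "rt (c s) < X0 + e" using root_range(2)[OF nns] False by linarith
          qed
        qed simp
      qed
      show ?thesis
        using d1 d2 unfolding X0_def
        by (intro exI[of _ "min d1 d2"]) (auto simp: dist_real_def abs_less_iff)
    next
      case False
      have lz: "lam (c s0) 0 = 0" using lam_zero[OF nn0 False] .
      have X01: "X0 = 1" using X0 lam_zero[OF nn0 False] unfolding eqn_def by auto
      obtain d where d: "d > 0" "\<forall>s\<in>{0..1}. dist s s0 < d \<longrightarrow> 0 < e - lam (c s) 0"
      proof -
        have "continuous_on {0..1} (\<lambda>s. e - lam (c s) 0)"
          by (intro continuous_on_diff continuous_on_const cl)
        moreover have "0 < e - lam (c s0) 0" using lz e by simp
        ultimately show ?thesis using loc[of "\<lambda>s. e - lam (c s) 0" s0] s0 that by blast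
      qed
      show ?thesis
      proof (intro exI[of _ d] conjI ballI impI)
        show "d > 0" by fact
        fix s :: real assume s: "s \<in> {0..1}" "dist s s0 < d"
        have nns: "\<forall>k\<le>K. 0 \<le> c s k" using nn s by auto
        define X where "X = rt (c s)"
        have X: "eqn (c s) X" unfolding X_def by (rule root_eqn[OF nns])
        have Xr: "0 < X" "X \<le> 1" using X unfolding eqn_def by auto
        have "1 - e < X"
        proof (cases "lam (c s) X = 0")
          case True
          then show ?thesis using X e unfolding eqn_def by auto
        next
          case False
          define l where "l = lam (c s) X"
          have l0: "0 \<le> l" unfolding l_def using lam_nonneg[OF nns] Xr by auto
          then have lp: "0 < l" using False l_def by auto
          have hx: "X * l = 1 - exp (- l)" using X unfolding eqn_h h_def T_eq l_def by simp
          have "exp (- l) \<le> 1 - l + l * l" by (rule exp_bound[OF l0])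
          then have "(1 - l) * l \<le> X * l" using hx by (simp add: algebra_simps)
          then have "1 - l \<le> X" using lp by simp
          moreover have "l \<le> lam (c s) 0" unfolding l_def using lam_mono[OF nns, of 0 X] Xr by simp
          ultimately show ?thesis using d s by auto
        qed
        then show "dist (rt (c s)) (rt (c s0)) < e"
          using Xr X01 unfolding X_def X0_def by (simp add: dist_real_def)
      qed
    qed
  qed
qed

end


lemma conv_G:
  fixes q r v :: real
  assumes "0 \<le> q" "0 \<le> r" "1 \<le> v" "1 \<le> j" "j + 1 \<le> K"
  shows "2 * (q^j * (v - 1 + r^(K-j))) \<le> q^(j-1) * (v - 1 + r^(K-(j-1))) + q^(j+1) * (v - 1 + r^(K-(j+1)))"
proof -
  obtain m where m: "j = Suc m" using assms by (cases j) auto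
  define t where "t = K - Suc (Suc m)"
  have t: "K = Suc (Suc (m + t))" using assms m unfolding t_def by simp
  have e1: "K - j = Suc t" "K - (j-1) = Suc (Suc t)" "K - (j+1) = t" using m t by auto
  have id: "b*(v-1+r*(r*a)) + q*(q*b)*(v-1+a) - 2*(q*b*(v-1+r*a)) = b*((v-1)*(1-q)^2 + a*(r-q)^2)"
    for a b :: real by (simp add: power2_eq_square algebra_simps)
  have "q^(j-1) * (v - 1 + r^(K-(j-1))) + q^(j+1) * (v - 1 + r^(K-(j+1))) - 2 * (q^j * (v - 1 + r^(K-j)))
      = q^m * ((v-1)*(1-q)^2 + r^t*(r-q)^2)"
    unfolding e1 using id[of "q^m" "r^t"] m by simp
  moreover have "0 \<le> q^m * ((v-1)*(1-q)^2 + r^t*(r-q)^2)" using assms by simp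
  ultimately show ?thesis by linarith
qed

lemma conv_up:
  fixes G :: "nat \<Rightarrow> real"
  assumes cv: "\<And>j. 1 \<le> j \<Longrightarrow> j + 1 \<le> K \<Longrightarrow> 2 * G j \<le> G (j-1) + G (j+1)"
    and k: "k < K" "G k \<le> G (Suc k)"
  shows "k \<le> j \<Longrightarrow> j \<le> K \<Longrightarrow> G k \<le> G j"
proof -
  have step: "k \<le> i \<Longrightarrow> i < K \<Longrightarrow> G i \<le> G (Suc i)" for i
  proof (induction i)
    case 0 then show ?case using k by simp
  next
    case (Suc i)
    show ?case
    proof (cases "k = Suc i")
      case True then show ?thesis using k by simp
    next
      case False
      then have "G i \<le> G (Suc i)" using Suc by simp
      moreover have "2 * G (Suc i) \<le> G i + G (Suc (Suc i))" using cv[of "Suc i"] Suc by simp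
      ultimately show ?thesis by linarith
    qed
  qed
  show "k \<le> j \<Longrightarrow> j \<le> K \<Longrightarrow> G k \<le> G j"
  proof (induction j)
    case 0 then show ?case by simp
  next
    case (Suc j)
    show ?case
    proof (cases "k = Suc j")
      case True then show ?thesis by simp
    next
      case False
      then show ?thesis using Suc step[of j] by force
    qed
  qed
qed

lemma conv_down:
  fixes G :: "nat \<Rightarrow> real"
  assumes cv: "\<And>j. 1 \<le> j \<Longrightarrow> j + 1 \<le> K \<Longrightarrow> 2 * G j \<le> G (j-1) + G (j+1)"
    and k: "0 < k" "k \<le> K" "G k \<le> G (k - 1)" and j: "j \<le> k"
  shows "G k \<le> G j"
proof -
  define G' where "G' i = G (K - i)" for i
  have cv': "2 * G' i \<le> G' (i-1) + G' (i+1)" if "1 \<le> i" "i + 1 \<le> K" for i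
  proof -
    have e: "K - (i - 1) = (K - i) + 1" "K - (i + 1) = (K - i) - 1" using that by auto
    have "2 * G (K - i) \<le> G (K - i - 1) + G (K - i + 1)" by (rule cv) (use that in auto)
    then show ?thesis unfolding G'_def e by linarith
  qed
  have a: "K - k < K" using k by simp
  have b: "G' (K - k) \<le> G' (Suc (K - k))" unfolding G'_def using k
    by (simp add: Suc_diff_le)
  have "G' (K - k) \<le> G' (K - j)" by (rule conv_up[OF cv' a b]) (use j k in auto)
  then show ?thesis unfolding G'_def using j k by simp
qed

lemma conv_min:
  fixes G :: "nat \<Rightarrow> real"
  assumes cv: "\<And>j. 1 \<le> j \<Longrightarrow> j + 1 \<le> K \<Longrightarrow> 2 * G j \<le> G (j-1) + G (j+1)"
    and k: "k \<le> K" "k = 0 \<or> G k \<le> G (k - 1)" "k = K \<or> G k \<le> G (Suc k)"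
    and j: "j \<le> K"
  shows "G k \<le> G j"
proof (cases "k \<le> j")
  case True
  show ?thesis
  proof (cases "k = j")
    case False
    then have kK: "k < K" using True j by simp
    then have "G k \<le> G (Suc k)" using k(3) by simp
    from conv_up[OF cv kK this True j] show ?thesis .
  qed simp
next
  case False
  then have k0: "0 < k" by simp
  then have "G k \<le> G (k - 1)" using k(2) by simp
  from conv_down[OF cv k0 k(1) this] False show ?thesis by simp
qed



definition delta :: "nat \<Rightarrow> nat \<Rightarrow> real" where "delta k = (\<lambda>j. if j = k then 1 else 0)"
definition seg :: "nat \<Rightarrow> real \<Rightarrow> nat \<Rightarrow> real" where
  "seg k s = (\<lambda>j. (1-s) * (if j = k then 1 else 0) + s * (if j = Suc k then 1 else 0))"

lemma seg0: "seg k 0 = delta k" by (auto simp: seg_def delta_def)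
lemma seg1: "seg k 1 = delta (Suc k)" by (auto simp: seg_def delta_def)

lemma payoff_eq: "payoff K v p p' j = v - (1-p)^j * (v - 1 + (1-p')^(K-j))"
  unfolding payoff_def by (simp add: algebra_simps)

locale mkt = fixes K :: nat and v dH hH hL :: real
  assumes v: "v > 1" and dH: "dH > 0" and hH: "hH > 0" and hL: "hL > 0"
begin

sublocale g1: gen dH hH K "\<lambda>k. k" using dH hH by unfold_locales
sublocale g2: gen dH hL K "\<lambda>k. K - k" using dH hL by unfold_locales

definition Pp where "Pp \<sigma> = g1.rt \<sigma>"
definition Pq where "Pq \<sigma> = g2.rt (\<lambda>k. \<sigma> k * (1 - Pp \<sigma>)^k)"
definition GG where "GG \<sigma> j = (1 - Pp \<sigma>)^j * (v - 1 + (1 - Pq \<sigma>)^(K-j))"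

lemma fp_iff: "fixed_point K dH hH hL \<sigma> p p' \<longleftrightarrow> g1.eqn \<sigma> p \<and> g2.eqn (\<lambda>k. \<sigma> k * (1-p)^k) p'"
  unfolding fixed_point_def g1.eqn_def g2.eqn_def g1.lam_def g2.lam_def lamH_def lamL_def by auto

lemma nn2:
  fixes \<sigma> :: "nat \<Rightarrow> real" and p :: real
  assumes "\<forall>k\<le>K. 0 \<le> \<sigma> k" "p \<le> 1" shows "\<forall>k\<le>K. 0 \<le> \<sigma> k * (1-p)^k"
proof (intro allI impI)
  fix k assume "k \<le> K"
  then have "0 \<le> \<sigma> k" using assms by simp
  moreover have "0 \<le> (1-p)^k" using assms by simp
  ultimately show "0 \<le> \<sigma> k * (1-p)^k" by simp
qed

lemma Pp_range: "\<forall>k\<le>K. 0 \<le> \<sigma> k \<Longrightarrow> 0 < Pp \<sigma> \<and> Pp \<sigma> \<le> 1"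
  unfolding Pp_def using g1.root_range[of \<sigma>] by simp

lemma Pq_range: "\<forall>k\<le>K. 0 \<le> \<sigma> k \<Longrightarrow> 0 < Pq \<sigma> \<and> Pq \<sigma> \<le> 1"
proof -
  assume nn: "\<forall>k\<le>K. 0 \<le> \<sigma> k"
  have "Pp \<sigma> \<le> 1" using Pp_range[OF nn] by simp
  from g2.root_range[OF nn2[OF nn this]] show ?thesis unfolding Pq_def by simp
qed

lemma fp_unique:
  assumes nn: "\<forall>k\<le>K. 0 \<le> \<sigma> k"
  shows "fixed_point K dH hH hL \<sigma> p p' \<longleftrightarrow> p = Pp \<sigma> \<and> p' = Pq \<sigma>"
proof
  assume "fixed_point K dH hH hL \<sigma> p p'"
  then have e1: "g1.eqn \<sigma> p" and e2: "g2.eqn (\<lambda>k. \<sigma> k * (1-p)^k) p'" unfolding fp_iff by auto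
  have p: "p = Pp \<sigma>" unfolding Pp_def using g1.root_unique[OF nn e1] by simp
  have "p \<le> 1" using e1 unfolding g1.eqn_def by simp
  then have "g2.rt (\<lambda>k. \<sigma> k * (1-p)^k) = p'" using g2.root_unique[OF nn2[OF nn] e2] by simp
  then show "p = Pp \<sigma> \<and> p' = Pq \<sigma>" using p unfolding Pq_def by simp
next
  assume a: "p = Pp \<sigma> \<and> p' = Pq \<sigma>"
  have "g1.eqn \<sigma> (Pp \<sigma>)" unfolding Pp_def by (rule g1.root_eqn[OF nn])
  moreover have "g2.eqn (\<lambda>k. \<sigma> k * (1 - Pp \<sigma>)^k) (Pq \<sigma>)"
  proof -
    have "Pp \<sigma> \<le> 1" using Pp_range[OF nn] by simp
    from g2.root_eqn[OF nn2[OF nn this]] show ?thesis unfolding Pq_def .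
  qed
  ultimately show "fixed_point K dH hH hL \<sigma> p p'" unfolding fp_iff using a by simp
qed

lemma GG_conv:
  assumes nn: "\<forall>k\<le>K. 0 \<le> \<sigma> k"
  shows "\<And>j. 1 \<le> j \<Longrightarrow> j + 1 \<le> K \<Longrightarrow> 2 * GG \<sigma> j \<le> GG \<sigma> (j-1) + GG \<sigma> (j+1)"
proof -
  fix j :: nat assume j: "1 \<le> j" "j + 1 \<le> K"
  have a: "0 \<le> 1 - Pp \<sigma>" "0 \<le> 1 - Pq \<sigma>" using Pp_range[OF nn] Pq_range[OF nn] by auto
  show "2 * GG \<sigma> j \<le> GG \<sigma> (j-1) + GG \<sigma> (j+1)"
    unfolding GG_def using conv_G[OF a(1) a(2) _ j, of v] v by simp
qed

lemma eq_suff: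
  assumes m: "mixed_strategy K \<sigma>" and opt: "\<forall>k\<le>K. 0 < \<sigma> k \<longrightarrow> (\<forall>j\<le>K. GG \<sigma> k \<le> GG \<sigma> j)"
  shows "symmetric_equilibrium_high K v dH hH hL \<sigma>"
proof -
  have nn: "\<forall>k\<le>K. 0 \<le> \<sigma> k" using m unfolding mixed_strategy_def by auto
  show ?thesis unfolding symmetric_equilibrium_high_def
  proof (intro conjI allI impI)
    show "mixed_strategy K \<sigma>" by fact
    show "\<exists>p p'. fixed_point K dH hH hL \<sigma> p p'" using fp_unique[OF nn] by blast
    fix p p' assume "fixed_point K dH hH hL \<sigma> p p'"
    then have pp: "p = Pp \<sigma>" "p' = Pq \<sigma>" using fp_unique[OF nn] by auto
    show "best_responses K v \<sigma> p p'"
      unfolding best_responses_def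
    proof (intro allI impI)
      fix k j assume k: "k \<le> K" "0 < \<sigma> k" and j: "j \<le> K"
      then have "GG \<sigma> k \<le> GG \<sigma> j" using opt by blast
      then show "payoff K v p p' j \<le> payoff K v p p' k"
        unfolding payoff_eq pp GG_def by linarith
    qed
  qed
qed

lemma delta_mixed: "k \<le> K \<Longrightarrow> mixed_strategy K (delta k)"
  unfolding mixed_strategy_def delta_def by (simp add: sum.delta')

lemma pure_eq:
  assumes k: "k \<le> K" "k = 0 \<or> GG (delta k) k \<le> GG (delta k) (k-1)"
    "k = K \<or> GG (delta k) k \<le> GG (delta k) (Suc k)"
  shows "\<exists>\<sigma>. symmetric_equilibrium_high K v dH hH hL \<sigma>"
proof -
  have m: "mixed_strategy K (delta k)" using delta_mixed k by simp
  have nn: "\<forall>k\<le>K. 0 \<le> delta k j" for j unfolding delta_def by simp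
  have nn': "\<forall>j\<le>K. 0 \<le> delta k j" unfolding delta_def by simp
  have "\<forall>i\<le>K. 0 < delta k i \<longrightarrow> (\<forall>j\<le>K. GG (delta k) i \<le> GG (delta k) j)"
  proof (intro allI impI)
    fix i j assume i: "i \<le> K" "0 < delta k i" and j: "j \<le> K"
    then have "i = k" unfolding delta_def by (auto split: if_splits)
    then show "GG (delta k) i \<le> GG (delta k) j"
      using conv_min[OF GG_conv[OF nn'] k j] by simp
  qed
  then show ?thesis using eq_suff[OF m] by blast
qed

lemma seg_mixed: assumes "k < K" "0 \<le> s" "s \<le> 1" shows "mixed_strategy K (seg k s)"
proof -
  have "(\<Sum>j\<le>K. seg k s j) = (\<Sum>j\<le>K. (1-s) * (if j = k then 1 else 0)) + (\<Sum>j\<le>K. s * (if j = Suc k then 1 else 0))"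
    unfolding seg_def by (simp add: sum.distrib)
  also have "\<dots> = (1 - s) + s" using assms
    by (simp only: sum_distrib_left[symmetric] sum.delta' finite_atMost) auto
  finally show ?thesis unfolding mixed_strategy_def using assms by (auto simp: seg_def)
qed

lemma seg_nn: "k < K \<Longrightarrow> s \<in> {0..1} \<Longrightarrow> \<forall>j\<le>K. 0 \<le> seg k s j"
  using seg_mixed unfolding mixed_strategy_def by auto

lemma seg_cont:
  assumes k: "k < K"
  shows "continuous_on {0..1} (\<lambda>s. GG (seg k s) k - GG (seg k s) (Suc k))"
proof -
  have cs: "continuous_on {0..1} (\<lambda>s. seg k s j)" for j
    unfolding seg_def by (intro continuous_intros)
  have c1: "continuous_on {0..1} (\<lambda>s. Pp (seg k s))"
    unfolding Pp_def by (rule g1.root_cont) (use seg_nn[OF k] cs in auto)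
  have c2: "continuous_on {0..1} (\<lambda>s. Pq (seg k s))"
    unfolding Pq_def
  proof (rule g2.root_cont[of "\<lambda>s j. seg k s j * (1 - Pp (seg k s))^j"])
    show "\<forall>s\<in>{0..1}. \<forall>j\<le>K. 0 \<le> seg k s j * (1 - Pp (seg k s)) ^ j"
      using seg_nn[OF k] Pp_range by (auto intro!: mult_nonneg_nonneg)
    show "continuous_on {0..1} (\<lambda>s. seg k s j * (1 - Pp (seg k s)) ^ j)" for j
      by (intro continuous_intros cs c1)
  qed
  show ?thesis unfolding GG_def by (intro continuous_intros c1 c2)
qed

lemma seg_eq:
  assumes k: "k < K" and a: "GG (delta k) (Suc k) \<le> GG (delta k) k"
    and b: "GG (delta (Suc k)) k \<le> GG (delta (Suc k)) (Suc k)"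
  shows "\<exists>\<sigma>. symmetric_equilibrium_high K v dH hH hL \<sigma>"
proof -
  define \<phi> where "\<phi> s = GG (seg k s) k - GG (seg k s) (Suc k)" for s
  have "\<phi> 1 \<le> 0" "0 \<le> \<phi> 0" using a b unfolding \<phi>_def seg0 seg1 by auto
  then obtain s where s: "0 \<le> s" "s \<le> 1" "\<phi> s = 0"
    using IVT2'[where f=\<phi> and a=0 and b=1 and y=0] seg_cont[OF k] unfolding \<phi>_def by auto
  define \<sigma> where "\<sigma> = seg k s"
  have m: "mixed_strategy K \<sigma>" unfolding \<sigma>_def using seg_mixed k s by simp
  have nn: "\<forall>j\<le>K. 0 \<le> \<sigma> j" using m unfolding mixed_strategy_def by auto
  note cv = GG_conv[OF nn]
  have eqk: "GG \<sigma> k = GG \<sigma> (Suc k)" using s unfolding \<phi>_def \<sigma>_def by simp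
  have mk: "GG \<sigma> k \<le> GG \<sigma> j" if "j \<le> K" for j
  proof (rule conv_min[OF cv _ _ _ that])
    show "k \<le> K" using k by simp
    show "k = K \<or> GG \<sigma> k \<le> GG \<sigma> (Suc k)" using eqk by simp
    show "k = 0 \<or> GG \<sigma> k \<le> GG \<sigma> (k - 1)"
    proof (cases k)
      case (Suc m)
      have "2 * GG \<sigma> k \<le> GG \<sigma> (k-1) + GG \<sigma> (k+1)" using cv[of k] Suc k by simp
      then show ?thesis using eqk by simp
    qed simp
  qed
  have mk1: "GG \<sigma> (Suc k) \<le> GG \<sigma> j" if "j \<le> K" for j
    using mk[OF that] eqk by simp
  have "\<forall>i\<le>K. 0 < \<sigma> i \<longrightarrow> (\<forall>j\<le>K. GG \<sigma> i \<le> GG \<sigma> j)"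
  proof (intro allI impI)
    fix i j assume i: "i \<le> K" "0 < \<sigma> i" and j: "j \<le> K"
    then have "i = k \<or> i = Suc k" unfolding \<sigma>_def seg_def by (auto split: if_splits)
    then show "GG \<sigma> i \<le> GG \<sigma> j" using mk mk1 j by auto
  qed
  then show ?thesis using eq_suff[OF m] by blast
qed

theorem exists_eq: "\<exists>\<sigma>. symmetric_equilibrium_high K v dH hH hL \<sigma>"
proof (rule ccontr)
  assume no: "\<not> ?thesis"
  have np: "\<not> (k = 0 \<or> GG (delta k) k \<le> GG (delta k) (k-1)) \<or> \<not> (k = K \<or> GG (delta k) k \<le> GG (delta k) (Suc k))"
    if "k \<le> K" for k
    using pure_eq[OF that] no by blast
  have ns: "\<not> (GG (delta k) (Suc k) \<le> GG (delta k) k) \<or> \<not> (GG (delta (Suc k)) k \<le> GG (delta (Suc k)) (Suc k))"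
    if "k < K" for k
    using seg_eq[OF that] no by blast
  have up: "k < K \<Longrightarrow> GG (delta k) (Suc k) < GG (delta k) k" for k
  proof (induction k)
    case 0
    then show ?case using np[of 0] by simp
  next
    case (Suc k)
    then have ih: "GG (delta k) (Suc k) < GG (delta k) k" by simp
    have "GG (delta (Suc k)) (Suc k) < GG (delta (Suc k)) k"
      using ns[of k] ih Suc.prems by simp
    then show ?case using np[of "Suc k"] Suc.prems by simp
  qed
  show False
  proof (cases K)
    case 0
    then show False using np[of 0] by simp
  next
    case (Suc m)
    then have "GG (delta m) (Suc m) < GG (delta m) m" using up[of m] by simp
    then have "GG (delta (Suc m)) (Suc m) < GG (delta (Suc m)) m"
      using ns[of m] Suc by simp
    then show False using np[of "Suc m"] Suc by simp
  qed
qed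

end

theorem lemma2:
  fixes K :: nat and v dH hH hL :: real
  assumes "v > 1" and "dH > 0" and "hH > 0" and "hL > 0"
  shows "\<exists>\<sigma>. symmetric_equilibrium_high K v dH hH hL \<sigma>"
proof -
  interpret mkt K v dH hH hL using assms by unfold_locales
  show ?thesis by (rule exists_eq)
qed

end
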